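(* Let $K\in\mathbb{N}^*$. For every $p\in\mathbb{N}^*$ there exist $C>0$ and a quadratic form $Q_p$ such that for every real-valued $\mu\in C_c^\infty(0,1)$, $$A^p_K(\mu)=\langle(\mu^{(2p-1)})^2\varphi_1,\varphi_K\rangle+Q_p(\mu),\qquad |Q_p(\mu)|\le C\|\mu\|^2_{H^{2p-2}(0,1)}.$$
   Context: $\varphi_j=\sqrt2\sin(j\pi x)$, $\lambda_j=(j\pi)^2$, $\langle f,g\rangle=\int_0^1f\bar g$, $c_j=\langle\mu\varphi_1,\varphi_j\rangle\langle\mu\varphi_K,\varphi_j\rangle$, and $A^p_K(\mu)=(-1)^{p-1}\sum_{j\ge1}(\lambda_j-\frac{\lambda_1+\lambda_K}2)(\lambda_K-\lambda_j)^{p-1}(\lambda_j-\lambda_1)^{p-1}c_j$, viewed as a quadratic form in $\mu$. $H^0=L^2$. *)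

theory Defs
  imports "HOL-Analysis.Analysis"
begin

definition phi :: "nat \<Rightarrow> real \<Rightarrow> real" where
  "phi j x = sqrt 2 * sin (real j * pi * x)"

definition lam :: "nat \<Rightarrow> real" where
  "lam j = (real j * pi)^2"

definition L2inner :: "(real \<Rightarrow> real) \<Rightarrow> (real \<Rightarrow> real) \<Rightarrow> real" where
  "L2inner f g = integral {0..1} (\<lambda>x. f x * g x)"

definition test_fun :: "(real \<Rightarrow> real) set" where
  "test_fun = {\<mu>. (\<forall>k x. ((deriv ^^ k) \<mu>) differentiable (at x)) \<and>
                 (\<exists>a b. 0 < a \<and> a \<le> b \<and> b < 1 \<and> (\<forall>x. x \<notin> {a..b} \<longrightarrow> \<mu> x = 0))}"

definition cc :: "nat \<Rightarrow> nat \<Rightarrow> (real \<Rightarrow> real) \<Rightarrow> real" where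
  "cc K j \<mu> = L2inner (\<lambda>x. \<mu> x * phi 1 x) (phi j) * L2inner (\<lambda>x. \<mu> x * phi K x) (phi j)"

definition AKp :: "nat \<Rightarrow> nat \<Rightarrow> (real \<Rightarrow> real) \<Rightarrow> real" where
  "AKp p K \<mu> = (-1)^(p-1) *
     (\<Sum>i. let j = Suc i in
        (lam j - (lam 1 + lam K) / 2) * (lam K - lam j)^(p-1) * (lam j - lam 1)^(p-1) * cc K j \<mu>)"

definition Hnorm_sq :: "nat \<Rightarrow> (real \<Rightarrow> real) \<Rightarrow> real" where
  "Hnorm_sq m \<mu> = (\<Sum>k\<le>m. integral {0..1} (\<lambda>x. ((deriv ^^ k) \<mu> x)^2))"

definition quadratic_form_on :: "(real \<Rightarrow> real) set \<Rightarrow> ((real \<Rightarrow> real) \<Rightarrow> real) \<Rightarrow> bool" where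
  "quadratic_form_on S Q \<longleftrightarrow> (\<exists>B.
     (\<forall>u\<in>S. Q u = B u u) \<and>
     (\<forall>u\<in>S. \<forall>v\<in>S. \<forall>w\<in>S. \<forall>a b::real.
        B (\<lambda>x. a * u x + b * v x) w = a * B u w + b * B v w \<and>
        B w (\<lambda>x. a * u x + b * v x) = a * B w u + b * B w v))"

end

theory Submission
  imports Defs
begin


lemma ftc01:
  assumes "\<And>x. (F has_real_derivative f x) (at x)"
  shows "(f has_integral (F 1 - F 0)) {0..1::real}"
  apply (rule fundamental_theorem_of_calculus)
   apply simp
  using assms has_real_derivative_iff_has_vector_derivative has_vector_derivative_at_within by blast

lemma sin_sin_int:
  "((\<lambda>x. sin (real i * pi * x) * sin (real j * pi * x)) has_integral
     (if i = j \<and> i \<noteq> 0 then 1/2 else 0)) {0..1}"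
proof (cases "i = j")
  case True
  show ?thesis
  proof (cases "i = 0")
    case True
    then show ?thesis using \<open>i = j\<close> by simp
  next
    case False
    define s where "s = 2 * real i * pi"
    have s0: "s \<noteq> 0" using False by (simp add: s_def)
    have d: "((\<lambda>x. (x - sin (s * x) / s) / 2) has_real_derivative
        sin (real i * pi * x) * sin (real j * pi * x)) (at x)" for x
    proof -
      have "((\<lambda>x. (x - sin (s * x) / s) / 2) has_real_derivative (1 - cos (s * x) * s / s) / 2) (at x)"
        by (auto intro!: derivative_eq_intros)
      moreover have "(1 - cos (s * x) * s / s) / 2 = sin (real i * pi * x) * sin (real j * pi * x)"
      proof -
        have "s * x = 2 * (real i * pi * x)" by (simp add: s_def)
        then have "cos (s * x) = 1 - 2 * sin (real i * pi * x) ^ 2" by (simp only: cos_double_sin)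
        then show ?thesis using s0 \<open>i = j\<close> by (simp add: power2_eq_square)
      qed
      ultimately show ?thesis by simp
    qed
    have e: "sin s = 0" unfolding s_def
      by (metis mult.assoc mult.commute of_nat_numeral of_nat_mult sin_npi)
    show ?thesis using ftc01[OF d] False \<open>i=j\<close> e by simp
  qed
next
  case False
  define d where "d = (real i - real j) * pi"
  define s where "s = (real i + real j) * pi"
  have d0: "d \<noteq> 0" using False by (simp add: d_def)
  have s0: "s \<noteq> 0" using False by (simp add: s_def)
  have der: "((\<lambda>x. (sin (d * x) / d - sin (s * x) / s) / 2) has_real_derivative
        sin (real i * pi * x) * sin (real j * pi * x)) (at x)" for x
  proof -
    have "((\<lambda>x. (sin (d * x) / d - sin (s * x) / s) / 2) has_real_derivative
         (cos (d * x) * d / d - cos (s * x) * s / s) / 2) (at x)"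
      by (auto intro!: derivative_eq_intros)
    moreover have "(cos (d * x) * d / d - cos (s * x) * s / s) / 2 = sin (real i * pi * x) * sin (real j * pi * x)"
    proof -
      have "(cos (d * x) * d / d - cos (s * x) * s / s) / 2 = (cos (d * x) - cos (s * x)) / 2"
        using d0 s0 by simp
      moreover have A: "d * x = real i * pi * x - real j * pi * x" by (simp add: d_def algebra_simps)
      moreover have B: "s * x = real i * pi * x + real j * pi * x" by (simp add: s_def algebra_simps)
      moreover have "(cos (d * x) - cos (s * x)) / 2 = sin (real i * pi * x) * sin (real j * pi * x)"
        by (simp only: A B sin_times_sin)
      ultimately show ?thesis by simp
    qed
    ultimately show ?thesis by simp
  qed
  have e1: "sin d = 0" unfolding d_def
    by (simp add: left_diff_distrib sin_diff)
  have e2: "sin s = 0" unfolding s_def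
    by (simp add: distrib_right sin_add)
  show ?thesis using ftc01[OF der] False e1 e2 by simp
qed

lemma cont_phi [continuous_intros]: "continuous_on S (phi k)"
  unfolding phi_def by (intro continuous_intros)

lemma integ01: "continuous_on {0..1} (f::real\<Rightarrow>real) \<Longrightarrow> f integrable_on {0..1::real}"
  by (rule integrable_continuous_interval)

lemma phi_phi: "integral {0..1} (\<lambda>x. phi i x * phi j x) = (if i = j \<and> i \<noteq> 0 then 1 else 0)"
proof -
  have "((\<lambda>x. 2 * (sin (real i * pi * x) * sin (real j * pi * x))) has_integral
     2 * (if i = j \<and> i \<noteq> 0 then 1/2 else 0)) {0..1}"
    by (intro has_integral_mult_right sin_sin_int)
  then have "((\<lambda>x. phi i x * phi j x) has_integral (if i = j \<and> i \<noteq> 0 then 1 else 0)) {0..1}"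
  proof -
    have sq: "\<And>y. sqrt 2 * (sqrt 2 * y) = 2 * y" by (simp flip: mult.assoc)
    have "(\<lambda>x. phi i x * phi j x) = (\<lambda>x. 2 * (sin (real i * pi * x) * sin (real j * pi * x)))"
      by (rule ext) (simp add: phi_def sq mult_ac)
    then show ?thesis using \<open>((\<lambda>x. 2 * (sin (real i * pi * x) * sin (real j * pi * x))) has_integral _) _\<close>
      by (auto split: if_splits)
  qed
  then show ?thesis by (rule integral_unique)
qed

definition cf :: "nat \<Rightarrow> (real \<Rightarrow> real) \<Rightarrow> real" where
  "cf k f = L2inner f (phi k)"

lemma phi0 [simp]: "phi 0 x = 0" by (simp add: phi_def)
lemma cf0 [simp]: "cf 0 f = 0" by (simp add: cf_def L2inner_def)

lemma bessel:
  assumes f: "continuous_on {0..1} f" and F: "finite F"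
  shows "(\<Sum>k\<in>F. cf k f ^ 2) \<le> L2inner f f"
proof -
  define c where "c k = cf k f" for k
  define S where "S x = (\<Sum>k\<in>F. c k * phi k x)" for x
  have cS: "continuous_on {0..1} S" unfolding S_def by (intro continuous_intros)
  have i1: "integral {0..1} (\<lambda>x. f x * S x) = (\<Sum>k\<in>F. c k * c k)"
  proof -
    have "integral {0..1} (\<lambda>x. f x * S x) = integral {0..1} (\<lambda>x. \<Sum>k\<in>F. c k * (f x * phi k x))"
      by (simp add: S_def sum_distrib_left algebra_simps)
    also have "\<dots> = (\<Sum>k\<in>F. integral {0..1} (\<lambda>x. c k * (f x * phi k x)))"
      by (rule integral_sum[OF F]) (intro integ01 continuous_intros f)
    also have "\<dots> = (\<Sum>k\<in>F. c k * c k)"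
      by (simp add: c_def cf_def L2inner_def)
    finally show ?thesis .
  qed
  have i2: "integral {0..1} (\<lambda>x. S x * S x) = (\<Sum>k\<in>F. c k * c k)"
  proof -
    have "integral {0..1} (\<lambda>x. S x * S x) =
       integral {0..1} (\<lambda>x. \<Sum>k\<in>F. \<Sum>l\<in>F. c k * c l * (phi k x * phi l x))"
      by (simp add: S_def sum_product algebra_simps)
    also have "\<dots> = (\<Sum>k\<in>F. integral {0..1} (\<lambda>x. \<Sum>l\<in>F. c k * c l * (phi k x * phi l x)))"
      by (rule integral_sum[OF F]) (intro integ01 continuous_intros)
    also have "\<dots> = (\<Sum>k\<in>F. \<Sum>l\<in>F. integral {0..1} (\<lambda>x. c k * c l * (phi k x * phi l x)))"
      by (intro sum.cong refl integral_sum[OF F]) (intro integ01 continuous_intros)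
    also have "\<dots> = (\<Sum>k\<in>F. \<Sum>l\<in>F. c k * c l * (if k = l \<and> k \<noteq> 0 then 1 else 0))"
      by (simp add: phi_phi)
    also have "\<dots> = (\<Sum>k\<in>F. c k * c k)"
    proof (intro sum.cong refl)
      fix k assume k: "k \<in> F"
      have "(\<Sum>l\<in>F. c k * c l * (if k = l \<and> k \<noteq> 0 then 1 else 0)) =
            (\<Sum>l\<in>F. if l = k then c k * c k else 0)"
        by (intro sum.cong refl) (auto simp: c_def)
      also have "\<dots> = c k * c k" using k F by simp
      finally show "(\<Sum>l\<in>F. c k * c l * (if k = l \<and> k \<noteq> 0 then 1 else 0)) = c k * c k" .
    qed
    finally show ?thesis .
  qed
  have "0 \<le> integral {0..1} (\<lambda>x. (f x - S x) * (f x - S x))"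
    by (intro integral_nonneg integ01 continuous_intros f cS) auto
  also have "\<dots> = integral {0..1} (\<lambda>x. f x * f x - 2 * (f x * S x) + S x * S x)"
    by (simp add: algebra_simps)
  also have "\<dots> = integral {0..1} (\<lambda>x. f x * f x) - 2 * integral {0..1} (\<lambda>x. f x * S x)
      + integral {0..1} (\<lambda>x. S x * S x)"
    by (subst integral_add integral_diff, (intro integ01 continuous_intros f cS)+)+ simp
  finally show ?thesis using i1 i2 by (simp add: L2inner_def c_def power2_eq_square)
qed

lemma bessel_Suc:
  assumes f: "continuous_on {0..1} f"
  shows "(\<Sum>i<n. cf (Suc i) f ^ 2) \<le> L2inner f f"
proof -
  have "(\<Sum>i<n. cf (Suc i) f ^ 2) = (\<Sum>k\<in>Suc ` {..<n}. cf k f ^ 2)"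
    by (simp add: sum.reindex)
  also have "\<dots> \<le> L2inner f f" by (rule bessel[OF f]) simp
  finally show ?thesis .
qed

lemma summable_sq:
  assumes f: "continuous_on {0..1} f"
  shows "summable (\<lambda>i. cf (Suc i) f ^ 2)"
  by (rule summableI_nonneg_bounded[OF _ bessel_Suc[OF f]]) simp

lemma suminf_sq_le:
  assumes f: "continuous_on {0..1} f"
  shows "(\<Sum>i. cf (Suc i) f ^ 2) \<le> L2inner f f"
  by (rule suminf_le_const[OF summable_sq[OF f] bessel_Suc[OF f]])

lemma summable_prod:
  assumes f: "continuous_on {0..1} f" and g: "continuous_on {0..1} g"
  shows "summable (\<lambda>i. cf (Suc i) f * cf (Suc i) g)"
proof (rule summable_comparison_test'[where N=0])
  show "summable (\<lambda>i. (cf (Suc i) f ^ 2 + cf (Suc i) g ^ 2) / 2)"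
    by (intro summable_divide summable_add summable_sq f g)
  fix n
  show "norm (cf (Suc n) f * cf (Suc n) g) \<le> (cf (Suc n) f ^ 2 + cf (Suc n) g ^ 2) / 2"
    using sum_squares_bound[of "\<bar>cf (Suc n) f\<bar>" "\<bar>cf (Suc n) g\<bar>"]
    by (simp add: abs_mult power2_eq_square)
qed

lemma cf_add: "continuous_on {0..1} f \<Longrightarrow> continuous_on {0..1} g \<Longrightarrow>
   cf k (\<lambda>x. f x + g x) = cf k f + cf k g"
  unfolding cf_def L2inner_def
  by (simp add: distrib_right integral_add integ01 continuous_intros)

lemma cf_cmul: "cf k (\<lambda>x. c * f x) = c * cf k f"
  unfolding cf_def L2inner_def by (simp add: mult.assoc)

definition PP :: "(real \<Rightarrow> real) \<Rightarrow> (real \<Rightarrow> real) \<Rightarrow> real" where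
  "PP f g = (\<Sum>i. cf (Suc i) f * cf (Suc i) g)"

lemma PP_sym: "PP f g = PP g f" unfolding PP_def by (simp add: mult.commute)

lemma PP_add:
  assumes "continuous_on {0..1} f" "continuous_on {0..1} g" "continuous_on {0..1} h"
  shows "PP (\<lambda>x. f x + g x) h = PP f h + PP g h"
  unfolding PP_def using assms
  by (simp add: cf_add distrib_right suminf_add[OF summable_prod summable_prod])

lemma PP_cmul:
  assumes "continuous_on {0..1} f" "continuous_on {0..1} h"
  shows "PP (\<lambda>x. c * f x) h = c * PP f h"
  unfolding PP_def using assms
  by (simp add: cf_cmul mult.assoc suminf_mult[OF summable_prod])

lemma PP_le: "continuous_on {0..1} f \<Longrightarrow> PP f f \<le> L2inner f f"
  unfolding PP_def using suminf_sq_le by (simp add: power2_eq_square)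

lemma PP_nonneg: "continuous_on {0..1} f \<Longrightarrow> 0 \<le> PP f f"
  unfolding PP_def
  by (intro suminf_nonneg summable_prod) auto



inductive sp :: "(real \<Rightarrow> real) \<Rightarrow> bool" where
  sp_sin: "sp (\<lambda>x. sin (real j * pi * x))"
| sp_add: "sp f \<Longrightarrow> sp g \<Longrightarrow> sp (\<lambda>x. f x + g x)"
| sp_cmul: "sp f \<Longrightarrow> sp (\<lambda>x. c * f x)"

lemma sp_cont: "sp f \<Longrightarrow> continuous_on S f"
  by (induction rule: sp.induct) (intro continuous_intros | assumption)+

lemma L2_add: "continuous_on {0..1} f \<Longrightarrow> continuous_on {0..1} g \<Longrightarrow> continuous_on {0..1} h \<Longrightarrow>
   L2inner (\<lambda>x. f x + g x) h = L2inner f h + L2inner g h"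
  unfolding L2inner_def by (simp add: distrib_right integral_add integ01 continuous_intros)

lemma L2_cmul: "L2inner (\<lambda>x. c * f x) h = c * L2inner f h"
  unfolding L2inner_def by (simp add: mult.assoc)

lemma L2_sym: "L2inner f g = L2inner g f"
  unfolding L2inner_def by (simp add: mult.commute)

lemma cf_sin: "cf k (\<lambda>x. sin (real j * pi * x)) = sqrt 2 * (if k = j \<and> k \<noteq> 0 then 1/2 else 0)"
proof -
  have "cf k (\<lambda>x. sin (real j * pi * x)) = sqrt 2 * integral {0..1} (\<lambda>x. sin (real k * pi * x) * sin (real j * pi * x))"
    unfolding cf_def L2inner_def phi_def by (simp add: mult_ac)
  also have "\<dots> = sqrt 2 * (if k = j \<and> k \<noteq> 0 then 1/2 else 0)"
    using integral_unique[OF sin_sin_int[of k j]] by simp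
  finally show ?thesis .
qed

lemma PP_sp:
  assumes "sp s" and t: "continuous_on {0..1} t"
  shows "PP s t = L2inner s t"
  using assms(1)
proof (induction rule: sp.induct)
  case (sp_sin j)
  show ?case
  proof (cases j)
    case 0
    have "cf k (\<lambda>x. 0) = 0" for k by (simp add: cf_def L2inner_def)
    then show ?thesis using 0 by (simp add: PP_def L2inner_def)
  next
    case (Suc m)
    have "PP (\<lambda>x. sin (real j * pi * x)) t = (\<Sum>i. if i = m then sqrt 2 / 2 * cf j t else 0)"
      unfolding PP_def cf_sin using Suc by (intro arg_cong[where f=suminf] ext) auto
    also have "\<dots> = sqrt 2 / 2 * cf j t" using sums_single[of m "\<lambda>_. sqrt 2 / 2 * cf j t"]
      by (simp add: sums_iff)
    also have "\<dots> = L2inner (\<lambda>x. sin (real j * pi * x)) t"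
    proof -
      have sq: "\<And>y. sqrt 2 / 2 * (sqrt 2 * y) = y" by (simp flip: mult.assoc)
      have sq2: "\<And>y. sqrt 2 * (sqrt 2 * y) = 2 * y" by (simp flip: mult.assoc)
      show ?thesis unfolding cf_def L2inner_def phi_def
        by (simp add: mult_ac sq sq2 flip: integral_mult_right)
    qed
    finally show ?thesis .
  qed
next
  case (sp_add f g)
  then show ?case using t sp_cont[of f] sp_cont[of g]
    by (simp add: PP_add L2_add)
next
  case (sp_cmul f c)
  then show ?case using t sp_cont[of f] by (simp add: PP_cmul L2_cmul)
qed

definition approx :: "(real \<Rightarrow> real) \<Rightarrow> bool" where
  "approx f \<longleftrightarrow> (\<forall>e>0. \<exists>s. sp s \<and> (\<forall>x\<in>{0..1}. \<bar>f x - s x\<bar> \<le> e))"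

lemma approx_add: "approx f \<Longrightarrow> approx g \<Longrightarrow> approx (\<lambda>x. f x + g x)"
  unfolding approx_def
proof (intro allI impI)
  fix e :: real assume e: "e > 0"
  assume A: "\<forall>e>0. \<exists>s. sp s \<and> (\<forall>x\<in>{0..1}. \<bar>f x - s x\<bar> \<le> e)"
     and B: "\<forall>e>0. \<exists>s. sp s \<and> (\<forall>x\<in>{0..1}. \<bar>g x - s x\<bar> \<le> e)"
  obtain s1 where s1: "sp s1" "\<forall>x\<in>{0..1}. \<bar>f x - s1 x\<bar> \<le> e/2" using A e by (meson half_gt_zero)
  obtain s2 where s2: "sp s2" "\<forall>x\<in>{0..1}. \<bar>g x - s2 x\<bar> \<le> e/2" using B e by (meson half_gt_zero)
  show "\<exists>s. sp s \<and> (\<forall>x\<in>{0..1}. \<bar>f x + g x - s x\<bar> \<le> e)"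
  proof (intro exI[of _ "\<lambda>x. s1 x + s2 x"] conjI ballI)
    show "sp (\<lambda>x. s1 x + s2 x)" using s1(1) s2(1) by (rule sp_add)
    fix x :: real assume "x \<in> {0..1}"
    then have "\<bar>f x - s1 x\<bar> \<le> e/2" "\<bar>g x - s2 x\<bar> \<le> e/2" using s1 s2 by auto
    then show "\<bar>f x + g x - (s1 x + s2 x)\<bar> \<le> e" by linarith
  qed
qed

lemma PP_diag:
  assumes f: "continuous_on {0..1} f" and ap: "approx f"
  shows "PP f f = L2inner f f"
proof -
  have bnd: "\<bar>PP f f - L2inner f f\<bar> \<le> e" if e: "e > 0" for e
  proof -
    obtain s where s: "sp s" "\<forall>x\<in>{0..1}. \<bar>f x - s x\<bar> \<le> sqrt e"
      using ap e unfolding approx_def by (meson real_sqrt_gt_zero)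
    define r where "r x = f x - s x" for x
    have cs: "continuous_on {0..1} s" using sp_cont[OF s(1)] .
    have cr: "continuous_on {0..1} r" unfolding r_def by (intro continuous_intros f cs)
    have fe: "f = (\<lambda>x. s x + r x)" by (simp add: r_def)
    have c1: "PP f f = L2inner s f + L2inner s r + PP r r"
    proof -
      have "PP f f = PP s f + PP r f"
        by (subst (1) fe) (intro PP_add cs cr f)
      also have "PP r f = PP f r" by (rule PP_sym)
      also have "PP f r = PP s r + PP r r"
        by (subst (1) fe) (intro PP_add cs cr f)
      finally show ?thesis using PP_sp[OF s(1) f] PP_sp[OF s(1) cr] by simp
    qed
    have c2: "L2inner f f = L2inner s f + L2inner s r + L2inner r r"
    proof -
      have "L2inner f f = L2inner s f + L2inner r f"
        by (subst (1) fe) (intro L2_add cs cr f)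
      also have "L2inner r f = L2inner f r" by (rule L2_sym)
      also have "L2inner f r = L2inner s r + L2inner r r"
        by (subst (1) fe) (intro L2_add cs cr f)
      finally show ?thesis by simp
    qed
    have rr: "L2inner r r \<le> e"
    proof -
      have "L2inner r r \<le> integral {0..1} (\<lambda>x::real. e)"
        unfolding L2inner_def
      proof (rule Henstock_Kurzweil_Integration.integral_le)
        show "(\<lambda>x. r x * r x) integrable_on {0..1}" by (intro integ01 continuous_intros cr)
        fix x :: real assume x: "x \<in> {0..1}"
        have "\<bar>r x\<bar> \<le> sqrt e" using s(2) x by (simp add: r_def)
        then have "r x ^ 2 \<le> sqrt e ^ 2" using power_mono[OF _ abs_ge_zero, of "r x" "sqrt e" 2] by simp
        then show "r x * r x \<le> e" using e by (simp add: power2_eq_square)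
      qed (rule integrable_const_ivl)
      then show ?thesis by simp
    qed
    have "0 \<le> PP r r" by (rule PP_nonneg[OF cr])
    moreover have "PP r r \<le> L2inner r r" by (rule PP_le[OF cr])
    ultimately show ?thesis using c1 c2 rr by simp
  qed
  show ?thesis
  proof (rule ccontr)
    assume ne: "PP f f \<noteq> L2inner f f"
    then have "\<bar>PP f f - L2inner f f\<bar> > 0" by simp
    from bnd[OF half_gt_zero[OF this]] ne show False by simp
  qed
qed

lemma parseval:
  assumes f: "continuous_on {0..1} f" and g: "continuous_on {0..1} g"
    and af: "approx f" and ag: "approx g"
  shows "PP f g = L2inner f g"
proof -
  have cfg: "continuous_on {0..1} (\<lambda>x. f x + g x)" by (intro continuous_intros f g)
  have "PP (\<lambda>x. f x + g x) (\<lambda>x. f x + g x) = L2inner (\<lambda>x. f x + g x) (\<lambda>x. f x + g x)"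
    by (intro PP_diag cfg approx_add af ag)
  moreover have "PP (\<lambda>x. f x + g x) (\<lambda>x. f x + g x) = PP f f + 2 * PP f g + PP g g"
  proof -
    have "PP (\<lambda>x. f x + g x) (\<lambda>x. f x + g x) = PP f (\<lambda>x. f x + g x) + PP g (\<lambda>x. f x + g x)"
      by (rule PP_add[OF f g cfg])
    also have "PP f (\<lambda>x. f x + g x) = PP f f + PP g f"
      using PP_add[OF f g f] PP_sym[of f "\<lambda>x. f x + g x"] by simp
    also have "PP g (\<lambda>x. f x + g x) = PP f g + PP g g"
      using PP_add[OF f g g] PP_sym[of g "\<lambda>x. f x + g x"] by simp
    also have "PP g f = PP f g" by (rule PP_sym)
    finally show ?thesis by simp
  qed
  moreover have "L2inner (\<lambda>x. f x + g x) (\<lambda>x. f x + g x) = L2inner f f + 2 * L2inner f g + L2inner g g"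
  proof -
    have "L2inner (\<lambda>x. f x + g x) (\<lambda>x. f x + g x) = L2inner f (\<lambda>x. f x + g x) + L2inner g (\<lambda>x. f x + g x)"
      by (rule L2_add[OF f g cfg])
    also have "L2inner f (\<lambda>x. f x + g x) = L2inner f f + L2inner g f"
      using L2_add[OF f g f] L2_sym[of f "\<lambda>x. f x + g x"] by simp
    also have "L2inner g (\<lambda>x. f x + g x) = L2inner f g + L2inner g g"
      using L2_add[OF f g g] L2_sym[of g "\<lambda>x. f x + g x"] by simp
    also have "L2inner g f = L2inner f g" by (rule L2_sym)
    finally show ?thesis by simp
  qed
  ultimately show ?thesis using PP_diag[OF f af] PP_diag[OF g ag] by simp
qed



lemma sp_cos: "sp s \<Longrightarrow> sp (\<lambda>x. s x * cos (pi * x))"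
proof (induction rule: sp.induct)
  case (sp_sin j)
  show ?case
  proof (cases j)
    case 0
    have "sp (\<lambda>x. 0 * sin (real 0 * pi * x))" by (intro sp.intros)
    then show ?thesis using 0 by simp
  next
    case (Suc m)
    have eq: "(\<lambda>x. sin (real j * pi * x) * cos (pi * x)) =
       (\<lambda>x. (1/2) * (sin (real (Suc j) * pi * x) + sin (real m * pi * x)))"
    proof
      fix x
      have "sin (real j * pi * x) * cos (pi * x) = (sin (real j * pi * x + pi * x) + sin (real j * pi * x - pi * x)) / 2"
        by (rule sin_times_cos)
      also have "real j * pi * x + pi * x = real (Suc j) * pi * x" by (simp add: algebra_simps)
      also have "real j * pi * x - pi * x = real m * pi * x" using Suc by (simp add: algebra_simps)
      finally show "sin (real j * pi * x) * cos (pi * x) = (1/2) * (sin (real (Suc j) * pi * x) + sin (real m * pi * x))"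
        by simp
    qed
    show ?thesis by (subst eq) (intro sp.intros)
  qed
next
  case (sp_add f g)
  then show ?case using sp.sp_add[OF sp_add.IH] by (simp add: distrib_right)
next
  case (sp_cmul f c)
  then show ?case using sp.sp_cmul[OF sp_cmul.IH, of c] by (simp add: mult.assoc)
qed

lemma sp_pow: "sp (\<lambda>x. sin (pi * x) * cos (pi * x) ^ i)"
proof (induction i)
  case 0
  show ?case using sp_sin[of 1] by simp
next
  case (Suc i)
  then show ?case using sp_cos[OF Suc] by (simp add: mult_ac)
qed

lemma sp_sum: "sp (\<lambda>x. \<Sum>i\<le>n. a i * (sin (pi * x) * cos (pi * x) ^ i))"
proof (induction n)
  case 0
  show ?case using sp_cmul[OF sp_pow[of 0], of "a 0"] by simp
next
  case (Suc n)
  show ?case using sp_add[OF Suc sp_cmul[OF sp_pow[of "Suc n"], of "a (Suc n)"]] by simp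
qed

lemma approx_test:
  assumes cont: "\<And>x. isCont f x" and a: "0 < a" and b: "b < 1"
    and z: "\<And>x. x \<notin> {a..b} \<Longrightarrow> f x = 0"
  shows "approx f"
  unfolding approx_def
proof (intro allI impI)
  fix e :: real assume e: "e > 0"
  define g where "g x = f x / sin (pi * x)" for x
  have gc: "continuous_on {0..1} g"
  proof (rule continuous_at_imp_continuous_on, rule ballI)
    fix x :: real assume x: "x \<in> {0..1}"
    consider "x = 0" | "x = 1" | "0 < x \<and> x < 1" using x by fastforce
    then show "isCont g x"
    proof cases
      case 1
      have "eventually (\<lambda>y. g y = 0) (nhds x)"
        unfolding eventually_nhds
        by (rule exI[of _ "{..<a}"]) (use 1 a z in \<open>auto simp: g_def\<close>)
      then show ?thesis by (subst isCont_cong[of g "\<lambda>_. 0"]) auto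
    next
      case 2
      have "eventually (\<lambda>y. g y = 0) (nhds x)"
        unfolding eventually_nhds
        by (rule exI[of _ "{b<..}"]) (use 2 b z in \<open>auto simp: g_def\<close>)
      then show ?thesis by (subst isCont_cong[of g "\<lambda>_. 0"]) auto
    next
      case 3
      then have "0 < pi * x" "pi * x < pi" by auto
      then have "sin (pi * x) \<noteq> 0" using sin_gt_zero by fastforce
      then show ?thesis unfolding g_def by (intro continuous_intros cont)
    qed
  qed
  define G where "G t = g (arccos t / pi)" for t
  have Gc: "continuous_on {-1..1} G"
    unfolding G_def
  proof (rule continuous_on_compose2[OF gc])
    show "continuous_on {-1..1} (\<lambda>x. arccos x / pi)" by (intro continuous_intros) auto
    show "(\<lambda>x. arccos x / pi) ` {-1..1} \<subseteq> {0..1}"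
      using arccos_lbound arccos_ubound by (auto simp: field_simps)
  qed
  obtain P where P: "real_polynomial_function P" "\<And>t. t \<in> {-1..1} \<Longrightarrow> \<bar>G t - P t\<bar> < e"
    using Stone_Weierstrass_real_polynomial_function[OF compact_Icc Gc e] by blast
  obtain c n where Pe: "P = (\<lambda>x. \<Sum>i\<le>n. c i * x ^ i)"
    using P(1) real_polynomial_function_iff_sum by blast
  define s where "s x = (\<Sum>i\<le>n. c i * (sin (pi * x) * cos (pi * x) ^ i))" for x
  have sps: "sp s" unfolding s_def by (rule sp_sum)
  show "\<exists>s. sp s \<and> (\<forall>x\<in>{0..1}. \<bar>f x - s x\<bar> \<le> e)"
  proof (intro exI[of _ s] conjI sps ballI)
    fix x :: real assume x: "x \<in> {0..1}"
    have sx: "s x = sin (pi * x) * P (cos (pi * x))"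
      unfolding s_def Pe by (simp add: sum_distrib_left mult_ac)
    have Gx: "G (cos (pi * x)) = g x" unfolding G_def using x by (simp add: arccos_cos)
    have fx: "f x = sin (pi * x) * g x"
    proof (cases "sin (pi * x) = 0")
      case True
      have "x \<notin> {a..b}"
      proof
        assume "x \<in> {a..b}"
        then have "0 < pi * x" "pi * x < pi" using a b by auto
        then show False using True sin_gt_zero by fastforce
      qed
      then show ?thesis using z True by simp
    next
      case False then show ?thesis by (simp add: g_def)
    qed
    have "\<bar>G (cos (pi * x)) - P (cos (pi * x))\<bar> < e" by (rule P(2)) simp
    then have "\<bar>g x - P (cos (pi * x))\<bar> \<le> e" using Gx by simp
    moreover have "\<bar>sin (pi * x)\<bar> \<le> 1" by (rule abs_sin_le_one)
    ultimately have "\<bar>sin (pi * x)\<bar> * \<bar>g x - P (cos (pi * x))\<bar> \<le> 1 * e"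
      by (intro mult_mono) auto
    then show "\<bar>f x - s x\<bar> \<le> e" unfolding fx sx
      by (simp add: abs_mult[symmetric] right_diff_distrib)
  qed
qed



definition Dk :: "(real \<Rightarrow> real) \<Rightarrow> nat \<Rightarrow> real \<Rightarrow> real" where
  "Dk \<mu> k = (deriv ^^ k) \<mu>"

lemma Dk_0 [simp]: "Dk \<mu> 0 = \<mu>" by (simp add: Dk_def)
lemma Dk_Suc: "Dk \<mu> (Suc k) = deriv (Dk \<mu> k)" by (simp add: Dk_def)

lemma test_D:
  assumes "\<mu> \<in> test_fun"
  shows "(Dk \<mu> k has_real_derivative Dk \<mu> (Suc k) x) (at x)"
proof -
  have "(deriv ^^ k) \<mu> differentiable (at x)" using assms unfolding test_fun_def by blast
  then show ?thesis unfolding Dk_Suc by (simp add: Dk_def DERIV_deriv_iff_real_differentiable)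
qed

lemma test_cont: "\<mu> \<in> test_fun \<Longrightarrow> isCont (Dk \<mu> k) x"
  using test_D DERIV_isCont by blast

lemma test_supp:
  assumes "\<mu> \<in> test_fun"
  shows "\<exists>a b. 0 < a \<and> a \<le> b \<and> b < 1 \<and> (\<forall>k x. x \<notin> {a..b} \<longrightarrow> Dk \<mu> k x = 0)"
proof -
  obtain a b where ab: "0 < a" "a \<le> b" "b < 1" "\<And>x. x \<notin> {a..b} \<Longrightarrow> \<mu> x = 0"
    using assms unfolding test_fun_def by blast
  have "x \<notin> {a..b} \<longrightarrow> Dk \<mu> k x = 0" for k x
  proof (induction k arbitrary: x)
    case 0 then show ?case using ab by simp
  next
    case (Suc k)
    show ?case
    proof
      assume x: "x \<notin> {a..b}"
      define S where "S = {..<a} \<union> {b<..}"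
      have S: "open S" "x \<in> S" using x by (auto simp: S_def)
      have "\<And>y. y \<in> S \<Longrightarrow> 0 = Dk \<mu> k y" using Suc by (auto simp: S_def)
      then have "(Dk \<mu> k has_real_derivative 0) (at x)"
        using has_field_derivative_transform_within_open[OF DERIV_const S] by blast
      then show "Dk \<mu> (Suc k) x = 0" using DERIV_unique test_D[OF assms] by blast
    qed
  qed
  then show ?thesis using ab by blast
qed

definition ev :: "real \<Rightarrow> real \<times> real \<Rightarrow> real \<Rightarrow> real" where
  "ev w c x = fst c * sin (w * x) + snd c * cos (w * x)"

definition dc :: "real \<Rightarrow> real \<times> real \<Rightarrow> real \<times> real" where
  "dc w c = (- w * snd c, w * fst c)"

definition pl :: "real \<times> real \<Rightarrow> real \<times> real \<Rightarrow> real \<times> real" where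
  "pl c d = (fst c + fst d, snd c + snd d)"

definition psc :: "real \<Rightarrow> real \<times> real \<Rightarrow> real \<times> real" where
  "psc t c = (t * fst c, t * snd c)"

lemma ev_deriv: "(ev w c has_real_derivative ev w (dc w c) x) (at x)"
proof -
  have "((\<lambda>x. fst c * sin (w * x) + snd c * cos (w * x)) has_real_derivative
      fst c * (cos (w * x) * w) + snd c * (- sin (w * x) * w)) (at x)"
    by (auto intro!: derivative_eq_intros)
  moreover have "(\<lambda>x. fst c * sin (w * x) + snd c * cos (w * x)) = ev w c"
    by (rule ext) (simp add: ev_def)
  ultimately show ?thesis by (simp add: ev_def dc_def algebra_simps)
qed

lemma ev_cont [continuous_intros]: "continuous_on S (ev w c)"
  unfolding ev_def by (intro continuous_intros)

lemma ev_pl [simp]: "ev w (pl c d) x = ev w c x + ev w d x"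
  by (simp add: ev_def pl_def algebra_simps)
lemma ev_psc [simp]: "ev w (psc t c) x = t * ev w c x"
  by (simp add: ev_def psc_def algebra_simps)
lemma ev_zero [simp]: "ev w (0, 0) x = 0"
  by (simp add: ev_def)
lemma dc_zero [simp]: "dc w (0, 0) = (0, 0)" by (simp add: dc_def)
lemma pl_zero [simp]: "pl c (0,0) = c" "pl (0,0) c = c" by (simp_all add: pl_def)
lemma psc_zero [simp]: "psc t (0,0) = (0,0)" by (simp add: psc_def)

lemma ev_bound: "\<bar>ev w c x\<bar> \<le> \<bar>fst c\<bar> + \<bar>snd c\<bar>"
proof -
  have "\<bar>fst c * sin (w * x)\<bar> \<le> \<bar>fst c\<bar>"
    using abs_sin_le_one[of "w*x"] by (simp add: abs_mult mult_left_le)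
  moreover have "\<bar>snd c * cos (w * x)\<bar> \<le> \<bar>snd c\<bar>"
    using abs_cos_le_one[of "w*x"] by (simp add: abs_mult mult_left_le)
  ultimately show ?thesis unfolding ev_def by linarith
qed

definition expr :: "real \<Rightarrow> (real \<Rightarrow> real) \<Rightarrow> (nat \<Rightarrow> real \<times> real) \<Rightarrow> nat \<Rightarrow> real \<Rightarrow> real" where
  "expr w \<mu> c N x = (\<Sum>i\<le>N. ev w (c i) x * Dk \<mu> i x)"

definition supp :: "(nat \<Rightarrow> real \<times> real) \<Rightarrow> nat \<Rightarrow> bool" where
  "supp c N \<longleftrightarrow> (\<forall>i>N. c i = (0, 0))"

definition dexpr :: "real \<Rightarrow> (nat \<Rightarrow> real \<times> real) \<Rightarrow> nat \<Rightarrow> real \<times> real" where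
  "dexpr w c i = pl (dc w (c i)) (case i of 0 \<Rightarrow> (0, 0) | Suc k \<Rightarrow> c k)"

lemma expr_deriv:
  assumes mu: "\<mu> \<in> test_fun" and s: "supp c N"
  shows "(expr w \<mu> c N has_real_derivative expr w \<mu> (dexpr w c) (Suc N) x) (at x)"
proof -
  have e: "expr w \<mu> c N = (\<lambda>x. \<Sum>i\<le>N. ev w (c i) x * Dk \<mu> i x)"
    by (rule ext) (simp add: expr_def)
  have "((\<lambda>x. \<Sum>i\<le>N. ev w (c i) x * Dk \<mu> i x) has_real_derivative
      (\<Sum>i\<le>N. ev w (dc w (c i)) x * Dk \<mu> i x + Dk \<mu> (Suc i) x * ev w (c i) x)) (at x)"
    by (intro DERIV_sum DERIV_mult ev_deriv test_D[OF mu])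
  moreover have "(\<Sum>i\<le>N. ev w (dc w (c i)) x * Dk \<mu> i x + Dk \<mu> (Suc i) x * ev w (c i) x)
      = expr w \<mu> (dexpr w c) (Suc N) x"
  proof -
    have cs: "c (Suc N) = (0, 0)" using s by (simp add: supp_def)
    have "expr w \<mu> (dexpr w c) (Suc N) x =
       (\<Sum>i\<le>Suc N. ev w (dc w (c i)) x * Dk \<mu> i x) +
       (\<Sum>i\<le>Suc N. ev w (case i of 0 \<Rightarrow> (0, 0) | Suc k \<Rightarrow> c k) x * Dk \<mu> i x)"
      by (simp add: expr_def dexpr_def distrib_right sum.distrib)
    also have "(\<Sum>i\<le>Suc N. ev w (dc w (c i)) x * Dk \<mu> i x) = (\<Sum>i\<le>N. ev w (dc w (c i)) x * Dk \<mu> i x)"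
      using cs by simp
    also have "(\<Sum>i\<le>Suc N. ev w (case i of 0 \<Rightarrow> (0, 0) | Suc k \<Rightarrow> c k) x * Dk \<mu> i x)
       = (\<Sum>i\<le>N. Dk \<mu> (Suc i) x * ev w (c i) x)"
      by (subst sum.atMost_Suc_shift) (simp add: mult.commute)
    finally show ?thesis by (simp add: sum.distrib)
  qed
  ultimately show ?thesis using e by simp
qed

lemma deriv_expr:
  "\<mu> \<in> test_fun \<Longrightarrow> supp c N \<Longrightarrow> deriv (expr w \<mu> c N) = expr w \<mu> (dexpr w c) (Suc N)"
  by (rule ext) (rule DERIV_imp_deriv[OF expr_deriv])

lemma supp_dexpr: "supp c N \<Longrightarrow> supp (dexpr w c) (Suc N)"
  unfolding supp_def dexpr_def by (auto split: nat.split)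

lemma dexpr_top: "supp c N \<Longrightarrow> dexpr w c (Suc N) = c N"
  unfolding supp_def dexpr_def by simp

lemma expr_extend:
  assumes "supp c N" "N \<le> M"
  shows "expr w \<mu> c M x = expr w \<mu> c N x"
proof -
  have "expr w \<mu> c M x = (\<Sum>i\<in>{..N} \<union> {N<..M}. ev w (c i) x * Dk \<mu> i x)"
    unfolding expr_def using assms(2) by (intro sum.cong) auto
  also have "\<dots> = expr w \<mu> c N x + (\<Sum>i\<in>{N<..M}. ev w (c i) x * Dk \<mu> i x)"
    unfolding expr_def by (subst sum.union_disjoint) auto
  also have "(\<Sum>i\<in>{N<..M}. ev w (c i) x * Dk \<mu> i x) = 0"
    using assms(1) by (intro sum.neutral) (auto simp: supp_def)
  finally show ?thesis by simp
qed

lemma expr_lin: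
  "expr w \<mu> (\<lambda>i. pl (psc a (c i)) (psc b (d i))) M x = a * expr w \<mu> c M x + b * expr w \<mu> d M x"
  by (simp add: expr_def distrib_right sum.distrib sum_distrib_left mult.assoc)



definition opL :: "real \<Rightarrow> (real \<Rightarrow> real) \<Rightarrow> real \<Rightarrow> real" where
  "opL l f = (\<lambda>x. - deriv (deriv f) x - l * f x)"

definition opc :: "real \<Rightarrow> real \<Rightarrow> (nat \<Rightarrow> real \<times> real) \<Rightarrow> nat \<Rightarrow> real \<times> real" where
  "opc l w c i = pl (psc (-1) (dexpr w (dexpr w c) i)) (psc (-l) (c i))"

lemma op_expr:
  assumes mu: "\<mu> \<in> test_fun" and s: "supp c N"
  shows "opL l (expr w \<mu> c N) = expr w \<mu> (opc l w c) (Suc (Suc N))"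
proof (rule ext)
  fix x
  have dd: "deriv (deriv (expr w \<mu> c N)) = expr w \<mu> (dexpr w (dexpr w c)) (Suc (Suc N))"
    using deriv_expr[OF mu s] deriv_expr[OF mu supp_dexpr[OF s]] by simp
  have ex: "expr w \<mu> c N x = expr w \<mu> c (Suc (Suc N)) x" by (rule expr_extend[OF s, symmetric]) simp
  show "opL l (expr w \<mu> c N) x = expr w \<mu> (opc l w c) (Suc (Suc N)) x"
    unfolding opL_def opc_def dd ex expr_lin by simp
qed

lemma supp_opc: "supp c N \<Longrightarrow> supp (opc l w c) (Suc (Suc N))"
proof -
  assume s: "supp c N"
  have s2: "supp (dexpr w (dexpr w c)) (Suc (Suc N))" by (intro supp_dexpr s)
  show ?thesis using s s2 unfolding supp_def opc_def by auto
qed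

lemma opc_top: "supp c N \<Longrightarrow> opc l w c (Suc (Suc N)) = psc (-1) (c N)"
proof -
  assume s: "supp c N"
  have "dexpr w (dexpr w c) (Suc (Suc N)) = c N"
    using dexpr_top[OF supp_dexpr[OF s]] dexpr_top[OF s] by simp
  moreover have "c (Suc (Suc N)) = (0,0)" using s by (simp add: supp_def)
  ultimately show ?thesis by (simp add: opc_def)
qed

definition c0 :: "real \<times> real \<Rightarrow> nat \<Rightarrow> real \<times> real" where
  "c0 ab i = (if i = 0 then ab else (0, 0))"

lemma supp_c0: "supp (c0 ab) 0" by (simp add: supp_def c0_def)

lemma iter_expr:
  "\<exists>c. supp c (2 * n) \<and> c (2 * n) = ((-1)^n * fst ab, (-1)^n * snd ab) \<and>
      (\<forall>\<mu>\<in>test_fun. (opL l ^^ n) (expr w \<mu> (c0 ab) 0) = expr w \<mu> c (2 * n))"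
proof (induction n)
  case 0
  show ?case by (intro exI[of _ "c0 ab"]) (simp add: supp_def c0_def)
next
  case (Suc n)
  then obtain c where c: "supp c (2 * n)" "c (2 * n) = ((-1)^n * fst ab, (-1)^n * snd ab)"
    "\<forall>\<mu>\<in>test_fun. (opL l ^^ n) (expr w \<mu> (c0 ab) 0) = expr w \<mu> c (2 * n)" by blast
  have e: "2 * Suc n = Suc (Suc (2 * n))" by simp
  show ?case
  proof (intro exI[of _ "opc l w c"] conjI ballI)
    show "supp (opc l w c) (2 * Suc n)" unfolding e by (rule supp_opc[OF c(1)])
    show "opc l w c (2 * Suc n) = ((-1)^Suc n * fst ab, (-1)^Suc n * snd ab)"
      unfolding e opc_top[OF c(1)] c(2) by (simp add: psc_def)
    fix \<mu> assume mu: "\<mu> \<in> test_fun"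
    show "(opL l ^^ Suc n) (expr w \<mu> (c0 ab) 0) = expr w \<mu> (opc l w c) (2 * Suc n)"
      using c(3) mu op_expr[OF mu c(1)] unfolding e by simp
  qed
qed

lemma expr_out:
  "(\<forall>k x. x \<notin> {a..b} \<longrightarrow> Dk \<mu> k x = 0) \<Longrightarrow> x \<notin> {a..b} \<Longrightarrow> expr w \<mu> c N x = 0"
  by (simp add: expr_def)

lemma expr_isCont: "\<mu> \<in> test_fun \<Longrightarrow> supp c N \<Longrightarrow> isCont (expr w \<mu> c N) x"
  using expr_deriv DERIV_isCont by blast

lemma expr_cont: "\<mu> \<in> test_fun \<Longrightarrow> supp c N \<Longrightarrow> continuous_on S (expr w \<mu> c N)"
  using expr_isCont continuous_at_imp_continuous_on by blast

lemma dphi: "(phi j has_real_derivative sqrt 2 * (real j * pi) * cos (real j * pi * x)) (at x)"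
proof -
  have "((\<lambda>x. sqrt 2 * sin (real j * pi * x)) has_real_derivative sqrt 2 * (cos (real j * pi * x) * (real j * pi))) (at x)"
    by (auto intro!: derivative_eq_intros)
  moreover have "(\<lambda>x. sqrt 2 * sin (real j * pi * x)) = phi j" by (rule ext) (simp add: phi_def)
  ultimately show ?thesis by (simp add: mult_ac)
qed

lemma ddphi: "((\<lambda>x. sqrt 2 * (real j * pi) * cos (real j * pi * x)) has_real_derivative - lam j * phi j x) (at x)"
proof -
  have "((\<lambda>x. sqrt 2 * (real j * pi) * cos (real j * pi * x)) has_real_derivative
       sqrt 2 * (real j * pi) * (- sin (real j * pi * x) * (real j * pi))) (at x)"
    by (auto intro!: derivative_eq_intros)
  then show ?thesis by (simp add: lam_def phi_def power2_eq_square mult_ac)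
qed

lemma eig:
  assumes d1: "\<And>x. (f has_real_derivative f1 x) (at x)"
    and d2: "\<And>x. (f1 has_real_derivative f2 x) (at x)"
    and c2: "continuous_on {0..1} f2"
    and z: "f 0 = 0" "f 1 = 0" "f1 0 = 0" "f1 1 = 0"
  shows "integral {0..1} (\<lambda>x. f2 x * phi j x) = - lam j * integral {0..1} (\<lambda>x. f x * phi j x)"
proof -
  define dp where "dp x = sqrt 2 * (real j * pi) * cos (real j * pi * x)" for x
  have cf: "continuous_on {0..1} f"
    using d1 DERIV_isCont continuous_at_imp_continuous_on by blast
  have hd: "((\<lambda>x. f1 x * phi j x - f x * dp x) has_real_derivative
       f2 x * phi j x + lam j * (f x * phi j x)) (at x)" for x
  proof -
    have "((\<lambda>x. f1 x * phi j x - f x * dp x) has_real_derivative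
       (f2 x * phi j x + dp x * f1 x) - (f1 x * dp x + (- lam j * phi j x) * f x)) (at x)"
      unfolding dp_def by (intro DERIV_diff DERIV_mult d1 d2 dphi ddphi)
    then show ?thesis by (simp add: algebra_simps)
  qed
  have "((\<lambda>x. f2 x * phi j x + lam j * (f x * phi j x)) has_integral 0) {0..1}"
    using ftc01[OF hd] z by simp
  then have "integral {0..1} (\<lambda>x. f2 x * phi j x + lam j * (f x * phi j x)) = 0" by (rule integral_unique)
  moreover have "integral {0..1} (\<lambda>x. f2 x * phi j x + lam j * (f x * phi j x)) =
     integral {0..1} (\<lambda>x. f2 x * phi j x) + lam j * integral {0..1} (\<lambda>x. f x * phi j x)"
    by (subst integral_add) (auto intro!: integ01 continuous_intros c2 cf)
  ultimately show ?thesis by simp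
qed

lemma cf_op_expr:
  assumes mu: "\<mu> \<in> test_fun" and s: "supp c N"
  shows "cf j (opL l (expr w \<mu> c N)) = (lam j - l) * cf j (expr w \<mu> c N)"
proof -
  obtain a b where ab: "0 < a" "a \<le> b" "b < 1" "\<forall>k x. x \<notin> {a..b} \<longrightarrow> Dk \<mu> k x = 0"
    using test_supp[OF mu] by blast
  define f where "f = expr w \<mu> c N"
  define f1 where "f1 = expr w \<mu> (dexpr w c) (Suc N)"
  define f2 where "f2 = expr w \<mu> (dexpr w (dexpr w c)) (Suc (Suc N))"
  have s1: "supp (dexpr w c) (Suc N)" by (rule supp_dexpr[OF s])
  have s2: "supp (dexpr w (dexpr w c)) (Suc (Suc N))" by (rule supp_dexpr[OF s1])
  have "integral {0..1} (\<lambda>x. f2 x * phi j x) = - lam j * integral {0..1} (\<lambda>x. f x * phi j x)"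
  proof (rule eig)
    show "(f has_real_derivative f1 x) (at x)" for x unfolding f_def f1_def by (rule expr_deriv[OF mu s])
    show "(f1 has_real_derivative f2 x) (at x)" for x unfolding f2_def f1_def by (rule expr_deriv[OF mu s1])
    show "continuous_on {0..1} f2" unfolding f2_def by (rule expr_cont[OF mu s2])
    show "f 0 = 0" "f 1 = 0" "f1 0 = 0" "f1 1 = 0" unfolding f_def f1_def
      using ab by (auto intro!: expr_out[OF ab(4)])
  qed
  moreover have "opL l f = (\<lambda>x. - f2 x - l * f x)"
    unfolding opL_def f2_def f_def deriv_expr[OF mu s] deriv_expr[OF mu s1] ..
  moreover have cf: "continuous_on {0..1} f" unfolding f_def by (rule expr_cont[OF mu s])
  moreover have c2: "continuous_on {0..1} f2" unfolding f2_def by (rule expr_cont[OF mu s2])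
  ultimately show ?thesis
    unfolding f_def[symmetric] cf_def L2inner_def
    by (simp add: left_diff_distrib integral_diff integ01 continuous_intros mult.assoc algebra_simps)
qed



lemma Dk_lin:
  assumes u: "u \<in> test_fun" and v: "v \<in> test_fun"
  shows "Dk (\<lambda>x. a * u x + b * v x) i = (\<lambda>x. a * Dk u i x + b * Dk v i x)"
proof (induction i)
  case 0 then show ?case by simp
next
  case (Suc i)
  have "((\<lambda>x. a * Dk u i x + b * Dk v i x) has_real_derivative a * Dk u (Suc i) x + b * Dk v (Suc i) x) (at x)" for x
    by (intro DERIV_add DERIV_cmult test_D u v)
  then show ?case unfolding Dk_Suc Suc by (intro ext DERIV_imp_deriv)
qed

lemma Dk_cont [continuous_intros]: "\<mu> \<in> test_fun \<Longrightarrow> continuous_on S (Dk \<mu> k)"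
  using test_cont continuous_at_imp_continuous_on by blast

definition trm :: "real \<Rightarrow> real \<Rightarrow> real \<times> real \<Rightarrow> real \<times> real \<Rightarrow> nat \<Rightarrow> nat \<Rightarrow>
    (real \<Rightarrow> real) \<Rightarrow> (real \<Rightarrow> real) \<Rightarrow> real" where
  "trm w1 w2 p q i k u v = integral {0..1} (\<lambda>x. ev w1 p x * ev w2 q x * Dk u i x * Dk v k x)"

lemma term_lin1:
  assumes "u \<in> test_fun" "v \<in> test_fun" "z \<in> test_fun"
  shows "trm w1 w2 p q i k (\<lambda>x. a * u x + b * v x) z = a * trm w1 w2 p q i k u z + b * trm w1 w2 p q i k v z"
  using Dk_lin[OF assms(1,2), of a b i] Dk_lin[OF assms(1,2), of a b k]
  by (simp add: trm_def algebra_simps integral_add integ01 continuous_intros assms flip: integral_mult_right)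

lemma term_lin2:
  assumes "u \<in> test_fun" "v \<in> test_fun" "z \<in> test_fun"
  shows "trm w1 w2 p q i k z (\<lambda>x. a * u x + b * v x) = a * trm w1 w2 p q i k z u + b * trm w1 w2 p q i k z v"
  using Dk_lin[OF assms(1,2), of a b i] Dk_lin[OF assms(1,2), of a b k]
  by (simp add: trm_def algebra_simps integral_add integ01 continuous_intros assms flip: integral_mult_right)

lemma expr_prod:
  assumes u: "u \<in> test_fun" and v: "v \<in> test_fun"
  shows "integral {0..1} (\<lambda>x. expr w1 u a M x * expr w2 v b M' x) =
     (\<Sum>i\<le>M. \<Sum>k\<le>M'. trm w1 w2 (a i) (b k) i k u v)"
proof -
  have "integral {0..1} (\<lambda>x. expr w1 u a M x * expr w2 v b M' x) =
     integral {0..1} (\<lambda>x. \<Sum>i\<le>M. \<Sum>k\<le>M'. ev w1 (a i) x * ev w2 (b k) x * Dk u i x * Dk v k x)"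
    unfolding expr_def by (simp add: sum_product mult_ac)
  also have "\<dots> = (\<Sum>i\<le>M. integral {0..1} (\<lambda>x. \<Sum>k\<le>M'. ev w1 (a i) x * ev w2 (b k) x * Dk u i x * Dk v k x))"
    by (rule integral_sum) (auto intro!: integ01 continuous_intros u v)
  also have "\<dots> = (\<Sum>i\<le>M. \<Sum>k\<le>M'. trm w1 w2 (a i) (b k) i k u v)"
  proof (intro sum.cong refl)
    fix i assume "i \<in> {..M}"
    show "integral {0..1} (\<lambda>x. \<Sum>k\<le>M'. ev w1 (a i) x * ev w2 (b k) x * Dk u i x * Dk v k x) =
        (\<Sum>k\<le>M'. trm w1 w2 (a i) (b k) i k u v)"
      unfolding trm_def
      by (rule integral_sum[of "{..M'}" "\<lambda>k x. ev w1 (a i) x * ev w2 (b k) x * Dk u i x * Dk v k x", simplified])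
        (auto intro!: integ01 continuous_intros u v)
  qed
  finally show ?thesis .
qed

lemma Dsq_le_H:
  assumes mu: "\<mu> \<in> test_fun" and i: "i \<le> N"
  shows "integral {0..1} (\<lambda>x. Dk \<mu> i x * Dk \<mu> i x) \<le> Hnorm_sq N \<mu>"
proof -
  have nn: "0 \<le> integral {0..1} (\<lambda>x. (Dk \<mu> k x)^2)" for k
    by (intro integral_nonneg integ01 continuous_intros mu) auto
  have "integral {0..1} (\<lambda>x. Dk \<mu> i x * Dk \<mu> i x) = integral {0..1} (\<lambda>x. (Dk \<mu> i x)^2)"
    by (simp add: power2_eq_square)
  also have "\<dots> \<le> (\<Sum>k\<le>N. integral {0..1} (\<lambda>x. (Dk \<mu> k x)^2))"
    by (rule member_le_sum[of i "{..N}" "\<lambda>k. integral {0..1} (\<lambda>x. (Dk \<mu> k x)^2)"]) (use i nn in auto)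
  also have "\<dots> = Hnorm_sq N \<mu>" by (simp add: Hnorm_sq_def Dk_def)
  finally show ?thesis .
qed

lemma H_nonneg: "\<mu> \<in> test_fun \<Longrightarrow> 0 \<le> Hnorm_sq N \<mu>"
  unfolding Hnorm_sq_def
  by (intro sum_nonneg integral_nonneg integ01 continuous_intros) (auto simp flip: Dk_def intro: Dk_cont)

lemma int_DD_bound:
  assumes mu: "\<mu> \<in> test_fun" and W: "continuous_on {0..1} W" and M: "\<And>x. x \<in> {0..1} \<Longrightarrow> \<bar>W x\<bar> \<le> M"
    and i: "i \<le> N" and k: "k \<le> N"
  shows "\<bar>integral {0..1} (\<lambda>x. W x * Dk \<mu> i x * Dk \<mu> k x)\<bar> \<le> M * Hnorm_sq N \<mu>"
proof -
  have M0: "0 \<le> M" using M[of 0] by simp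
  define G where "G x = M / 2 * (Dk \<mu> i x * Dk \<mu> i x + Dk \<mu> k x * Dk \<mu> k x)" for x
  have pt: "\<bar>W x * Dk \<mu> i x * Dk \<mu> k x\<bar> \<le> G x" if x: "x \<in> {0..1}" for x
  proof -
    have "\<bar>W x * Dk \<mu> i x * Dk \<mu> k x\<bar> = \<bar>W x\<bar> * \<bar>Dk \<mu> i x * Dk \<mu> k x\<bar>" by (simp add: abs_mult)
    also have "\<dots> \<le> M * \<bar>Dk \<mu> i x * Dk \<mu> k x\<bar>" by (intro mult_right_mono M x) simp
    also have "\<bar>Dk \<mu> i x * Dk \<mu> k x\<bar> \<le> (Dk \<mu> i x * Dk \<mu> i x + Dk \<mu> k x * Dk \<mu> k x) / 2"
      using sum_squares_bound[of "\<bar>Dk \<mu> i x\<bar>" "\<bar>Dk \<mu> k x\<bar>"] by (simp add: abs_mult power2_eq_square)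
    then have "M * \<bar>Dk \<mu> i x * Dk \<mu> k x\<bar> \<le> G x" unfolding G_def using M0
      by (metis mult_left_mono times_divide_eq_left times_divide_eq_right)
    finally show ?thesis .
  qed
  have iW: "(\<lambda>x. W x * Dk \<mu> i x * Dk \<mu> k x) integrable_on {0..1}"
    by (intro integ01 continuous_intros W mu)
  have iG: "G integrable_on {0..1}" unfolding G_def by (intro integ01 continuous_intros mu)
  have "\<bar>integral {0..1} (\<lambda>x. W x * Dk \<mu> i x * Dk \<mu> k x)\<bar> \<le> integral {0..1} G"
  proof -
    have "integral {0..1} (\<lambda>x. W x * Dk \<mu> i x * Dk \<mu> k x) \<le> integral {0..1} G"
      by (rule Henstock_Kurzweil_Integration.integral_le[OF iW iG]) (use pt in force)
    moreover have "- integral {0..1} G \<le> integral {0..1} (\<lambda>x. W x * Dk \<mu> i x * Dk \<mu> k x)"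
    proof -
      have "integral {0..1} (\<lambda>x. - G x) \<le> integral {0..1} (\<lambda>x. W x * Dk \<mu> i x * Dk \<mu> k x)"
        by (rule Henstock_Kurzweil_Integration.integral_le[OF integrable_neg[OF iG] iW]) (use pt in force)
      then show ?thesis by simp
    qed
    ultimately show ?thesis by linarith
  qed
  also have "integral {0..1} G = M / 2 * (integral {0..1} (\<lambda>x. Dk \<mu> i x * Dk \<mu> i x) +
       integral {0..1} (\<lambda>x. Dk \<mu> k x * Dk \<mu> k x))"
    unfolding G_def by (simp add: integral_add integ01 continuous_intros mu)
  also have "\<dots> \<le> M / 2 * (Hnorm_sq N \<mu> + Hnorm_sq N \<mu>)"
    using Dsq_le_H[OF mu i] Dsq_le_H[OF mu k] M0 by (intro mult_left_mono add_mono) auto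
  also have "\<dots> = M * Hnorm_sq N \<mu>" by simp
  finally show ?thesis .
qed

lemma int_zero_deriv:
  assumes "\<And>x. (h has_real_derivative h' x) (at x)" "h 0 = 0" "h 1 = 0"
  shows "integral {0..1} h' = 0"
  using ftc01[OF assms(1)] assms(2,3) by (simp add: integral_unique)

lemma int_top_bound:
  assumes mu: "\<mu> \<in> test_fun" and dW: "\<And>x. (W has_real_derivative W' x) (at x)"
    and cW': "continuous_on {0..1} W'"
    and M: "\<And>x. x \<in> {0..1} \<Longrightarrow> \<bar>W x\<bar> \<le> M" and M': "\<And>x. x \<in> {0..1} \<Longrightarrow> \<bar>W' x\<bar> \<le> M'"
    and i: "i \<le> N"
  shows "\<bar>integral {0..1} (\<lambda>x. W x * Dk \<mu> (Suc N) x * Dk \<mu> i x)\<bar> \<le> (M + M') * Hnorm_sq N \<mu>"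
proof -
  obtain a b where ab: "0 < a" "a \<le> b" "b < 1" "\<forall>k x. x \<notin> {a..b} \<longrightarrow> Dk \<mu> k x = 0"
    using test_supp[OF mu] by blast
  have z0: "Dk \<mu> k 0 = 0" and z1: "Dk \<mu> k 1 = 0" for k using ab by auto
  have cW: "continuous_on {0..1} W" using dW DERIV_isCont continuous_at_imp_continuous_on by blast
  have M0: "0 \<le> M" using M[of 0] by simp
  have M'0: "0 \<le> M'" using M'[of 0] by simp
  have H0: "0 \<le> Hnorm_sq N \<mu>" by (rule H_nonneg[OF mu])
  have hd: "((\<lambda>x. W x * Dk \<mu> N x * Dk \<mu> i x) has_real_derivative
      W' x * Dk \<mu> N x * Dk \<mu> i x + W x * Dk \<mu> (Suc N) x * Dk \<mu> i x + W x * Dk \<mu> N x * Dk \<mu> (Suc i) x) (at x)" for x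
    by (auto intro!: derivative_eq_intros dW test_D[OF mu] simp: algebra_simps)
  have "integral {0..1} (\<lambda>x. W' x * Dk \<mu> N x * Dk \<mu> i x + W x * Dk \<mu> (Suc N) x * Dk \<mu> i x
        + W x * Dk \<mu> N x * Dk \<mu> (Suc i) x) = 0"
    by (rule int_zero_deriv[OF hd]) (simp_all add: z0 z1)
  then have eq: "integral {0..1} (\<lambda>x. W' x * Dk \<mu> N x * Dk \<mu> i x) + integral {0..1} (\<lambda>x. W x * Dk \<mu> (Suc N) x * Dk \<mu> i x)
        + integral {0..1} (\<lambda>x. W x * Dk \<mu> N x * Dk \<mu> (Suc i) x) = 0"
    by (simp add: integral_add integ01 continuous_intros mu cW cW')
  show ?thesis
  proof (cases "i = N")
    case True
    then have "2 * integral {0..1} (\<lambda>x. W x * Dk \<mu> (Suc N) x * Dk \<mu> i x) = - integral {0..1} (\<lambda>x. W' x * Dk \<mu> N x * Dk \<mu> N x)"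
      using eq by (simp add: mult_ac)
    moreover have "\<bar>integral {0..1} (\<lambda>x. W' x * Dk \<mu> N x * Dk \<mu> N x)\<bar> \<le> M' * Hnorm_sq N \<mu>"
      by (rule int_DD_bound[OF mu cW' M']) auto
    ultimately have "\<bar>integral {0..1} (\<lambda>x. W x * Dk \<mu> (Suc N) x * Dk \<mu> i x)\<bar> \<le> M' * Hnorm_sq N \<mu> / 2"
      by simp
    also have "\<dots> \<le> (M + M') * Hnorm_sq N \<mu>" using M0 M'0 H0 by (simp add: algebra_simps mult_nonneg_nonneg)
    finally show ?thesis .
  next
    case False
    then have iN: "Suc i \<le> N" using i by simp
    have b1: "\<bar>integral {0..1} (\<lambda>x. W' x * Dk \<mu> N x * Dk \<mu> i x)\<bar> \<le> M' * Hnorm_sq N \<mu>"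
      by (rule int_DD_bound[OF mu cW' M' _ i]) auto
    have b2: "\<bar>integral {0..1} (\<lambda>x. W x * Dk \<mu> N x * Dk \<mu> (Suc i) x)\<bar> \<le> M * Hnorm_sq N \<mu>"
      by (rule int_DD_bound[OF mu cW M _ iN]) auto
    show ?thesis using eq b1 b2 by (simp add: algebra_simps)
  qed
qed



definition eb :: "real \<times> real \<Rightarrow> real" where "eb c = \<bar>fst c\<bar> + \<bar>snd c\<bar>"

lemma W_bound: "\<bar>ev w1 p x * ev w2 q x\<bar> \<le> eb p * eb q"
  unfolding eb_def abs_mult by (intro mult_mono ev_bound) auto

lemma W_deriv: "((\<lambda>x. ev w1 p x * ev w2 q x) has_real_derivative
    ev w1 (dc w1 p) x * ev w2 q x + ev w1 p x * ev w2 (dc w2 q) x) (at x)"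
  using DERIV_mult[OF ev_deriv[of w1 p x] ev_deriv[of w2 q x]] by (simp add: mult.commute)

lemma W'_bound: "\<bar>ev w1 (dc w1 p) x * ev w2 q x + ev w1 p x * ev w2 (dc w2 q) x\<bar>
    \<le> eb (dc w1 p) * eb q + eb p * eb (dc w2 q)"
  using W_bound[of w1 "dc w1 p" x w2 q] W_bound[of w1 p x w2 "dc w2 q"] by linarith

lemma trm_low:
  assumes mu: "\<mu> \<in> test_fun" and "i \<le> N" "k \<le> N"
  shows "\<bar>trm w1 w2 p q i k \<mu> \<mu>\<bar> \<le> eb p * eb q * Hnorm_sq N \<mu>"
  unfolding trm_def
  by (rule int_DD_bound[OF mu _ _ assms(2,3)]) (auto intro!: continuous_intros W_bound)

lemma trm_top1:
  assumes mu: "\<mu> \<in> test_fun" and "i \<le> N"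
  shows "\<bar>trm w1 w2 p q (Suc N) i \<mu> \<mu>\<bar> \<le>
     (eb p * eb q + (eb (dc w1 p) * eb q + eb p * eb (dc w2 q))) * Hnorm_sq N \<mu>"
  unfolding trm_def
  by (rule int_top_bound[OF mu W_deriv _ _ _ assms(2)]) (auto intro!: continuous_intros W_bound W'_bound)

lemma trm_top2:
  assumes mu: "\<mu> \<in> test_fun" and "i \<le> N"
  shows "\<bar>trm w1 w2 p q i (Suc N) \<mu> \<mu>\<bar> \<le>
     (eb p * eb q + (eb (dc w1 p) * eb q + eb p * eb (dc w2 q))) * Hnorm_sq N \<mu>"
proof -
  have "trm w1 w2 p q i (Suc N) \<mu> \<mu> = trm w1 w2 p q (Suc N) i \<mu> \<mu>"
    unfolding trm_def by (simp add: mult_ac)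
  then show ?thesis using trm_top1[OF assms] by simp
qed

lemma sum_bound:
  fixes f :: "'s \<Rightarrow> 'a \<Rightarrow> real" and H :: "'a \<Rightarrow> real"
  assumes "finite S" "\<forall>s\<in>S. \<exists>C. \<forall>\<mu>\<in>T. \<bar>f s \<mu>\<bar> \<le> C * H \<mu>"
  shows "\<exists>C. \<forall>\<mu>\<in>T. \<bar>\<Sum>s\<in>S. f s \<mu>\<bar> \<le> C * H \<mu>"
  using assms
proof (induction S rule: finite_induct)
  case empty then show ?case by (intro exI[of _ 0]) simp
next
  case (insert s S)
  obtain C1 where C1: "\<forall>\<mu>\<in>T. \<bar>f s \<mu>\<bar> \<le> C1 * H \<mu>" using insert by blast
  obtain C2 where C2: "\<forall>\<mu>\<in>T. \<bar>\<Sum>s\<in>S. f s \<mu>\<bar> \<le> C2 * H \<mu>" using insert by blast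
  show ?case
  proof (intro exI[of _ "C1 + C2"] ballI)
    fix \<mu> assume "\<mu> \<in> T"
    then have "\<bar>f s \<mu>\<bar> \<le> C1 * H \<mu>" "\<bar>\<Sum>s\<in>S. f s \<mu>\<bar> \<le> C2 * H \<mu>" using C1 C2 by auto
    then show "\<bar>\<Sum>s\<in>insert s S. f s \<mu>\<bar> \<le> (C1 + C2) * H \<mu>"
      using insert(1,2) by (simp add: distrib_right)
  qed
qed

lemma energy:
  assumes mu: "\<mu> \<in> test_fun" and sU: "supp cU N" and sV: "supp cV N'"
  shows "L2inner (opL m (expr w1 \<mu> cU N)) (expr w2 \<mu> cV N') =
    integral {0..1} (\<lambda>x. expr w1 \<mu> (dexpr w1 cU) (Suc N) x * expr w2 \<mu> (dexpr w2 cV) (Suc N') x)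
    - m * integral {0..1} (\<lambda>x. expr w1 \<mu> cU N x * expr w2 \<mu> cV N' x)"
proof -
  obtain a b where ab: "0 < a" "a \<le> b" "b < 1" "\<forall>k x. x \<notin> {a..b} \<longrightarrow> Dk \<mu> k x = 0"
    using test_supp[OF mu] by blast
  define U where "U = expr w1 \<mu> cU N"
  define U1 where "U1 = expr w1 \<mu> (dexpr w1 cU) (Suc N)"
  define U2 where "U2 = expr w1 \<mu> (dexpr w1 (dexpr w1 cU)) (Suc (Suc N))"
  define V where "V = expr w2 \<mu> cV N'"
  define V1 where "V1 = expr w2 \<mu> (dexpr w2 cV) (Suc N')"
  have s1: "supp (dexpr w1 cU) (Suc N)" by (rule supp_dexpr[OF sU])
  have s2: "supp (dexpr w1 (dexpr w1 cU)) (Suc (Suc N))" by (rule supp_dexpr[OF s1])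
  have t1: "supp (dexpr w2 cV) (Suc N')" by (rule supp_dexpr[OF sV])
  have cU: "continuous_on {0..1} U" "continuous_on {0..1} U1" "continuous_on {0..1} U2"
    unfolding U_def U1_def U2_def by (intro expr_cont mu sU s1 s2)+
  have cV: "continuous_on {0..1} V" "continuous_on {0..1} V1"
    unfolding V_def V1_def by (intro expr_cont mu sV t1)+
  have hd: "((\<lambda>x. U1 x * V x) has_real_derivative U2 x * V x + U1 x * V1 x) (at x)" for x
    using DERIV_mult[OF expr_deriv[OF mu s1, where w=w1 and x=x] expr_deriv[OF mu sV, where w=w2 and x=x]]
    unfolding U1_def U2_def V_def V1_def by (simp add: mult.commute)
  have "integral {0..1} (\<lambda>x. U2 x * V x + U1 x * V1 x) = 0"
    by (rule int_zero_deriv[OF hd]) (use ab in \<open>auto simp: V_def intro!: expr_out[OF ab(4)]\<close>)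
  then have i0: "integral {0..1} (\<lambda>x. U2 x * V x) + integral {0..1} (\<lambda>x. U1 x * V1 x) = 0"
    by (simp add: integral_add integ01 continuous_intros cU cV)
  have op: "opL m U = (\<lambda>x. - U2 x - m * U x)"
    unfolding opL_def U_def U2_def deriv_expr[OF mu sU] deriv_expr[OF mu s1] ..
  have "L2inner (opL m U) V = - integral {0..1} (\<lambda>x. U2 x * V x) - m * integral {0..1} (\<lambda>x. U x * V x)"
    unfolding op L2inner_def
    by (simp add: left_diff_distrib integral_diff integ01 continuous_intros cU cV mult.assoc
        flip: integral_mult_right)
  then show ?thesis using i0 unfolding U_def[symmetric] V_def[symmetric] U1_def[symmetric] V1_def[symmetric]
    by simp
qed

lemma cf_iter:
  assumes mu: "\<mu> \<in> test_fun"
  shows "cf j ((opL l ^^ n) (expr w \<mu> (c0 ab) 0)) = (lam j - l)^n * cf j (expr w \<mu> (c0 ab) 0)"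
proof (induction n)
  case 0 then show ?case by simp
next
  case (Suc n)
  obtain c where c: "supp c (2 * n)" "\<forall>\<mu>\<in>test_fun. (opL l ^^ n) (expr w \<mu> (c0 ab) 0) = expr w \<mu> c (2 * n)"
    using iter_expr[of n ab l w] by blast
  have "cf j ((opL l ^^ Suc n) (expr w \<mu> (c0 ab) 0)) = cf j (opL l (expr w \<mu> c (2 * n)))"
    using c(2) mu by simp
  also have "\<dots> = (lam j - l) * cf j (expr w \<mu> c (2 * n))" by (rule cf_op_expr[OF mu c(1)])
  also have "expr w \<mu> c (2 * n) = (opL l ^^ n) (expr w \<mu> (c0 ab) 0)" using c(2) mu by simp
  finally show ?case using Suc by simp
qed

lemma approx_expr:
  assumes mu: "\<mu> \<in> test_fun" and s: "supp c N"
  shows "approx (expr w \<mu> c N)"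
proof -
  obtain a b where ab: "0 < a" "a \<le> b" "b < 1" "\<forall>k x. x \<notin> {a..b} \<longrightarrow> Dk \<mu> k x = 0"
    using test_supp[OF mu] by blast
  show ?thesis
    by (rule approx_test[OF expr_isCont[OF mu s] ab(1) ab(3)]) (rule expr_out[OF ab(4)])
qed



theorem propositionA3:
  fixes K p :: nat
  assumes "K \<ge> 1" and "p \<ge> 1"
  shows "\<exists>C>0. \<exists>Q. quadratic_form_on test_fun Q \<and>
           (\<forall>\<mu>\<in>test_fun.
              AKp p K \<mu> = L2inner (\<lambda>x. ((deriv ^^ (2*p-1)) \<mu> x)^2 * phi 1 x) (phi K) + Q \<mu> \<and>
              \<bar>Q \<mu>\<bar> \<le> C * Hnorm_sq (2*p-2) \<mu>)"
proof -
  define n where "n = p - 1"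
  define N where "N = 2 * n"
  have pN: "2 * p - 1 = Suc N" "2 * p - 2 = N" using assms(2) by (auto simp: N_def n_def)
  define w1 where "w1 = pi"
  define w2 where "w2 = real K * pi"
  define ab where "ab = (sqrt 2, 0::real)"
  define m where "m = (lam 1 + lam K) / 2"
  obtain cU where cU: "supp cU N" "cU N = ((-1)^n * sqrt 2, 0)"
     "\<forall>\<mu>\<in>test_fun. (opL (lam 1) ^^ n) (expr w1 \<mu> (c0 ab) 0) = expr w1 \<mu> cU N"
    using iter_expr[of n ab "lam 1" w1] unfolding N_def ab_def by auto
  obtain cV where cV: "supp cV N" "cV N = ((-1)^n * sqrt 2, 0)"
     "\<forall>\<mu>\<in>test_fun. (opL (lam K) ^^ n) (expr w2 \<mu> (c0 ab) 0) = expr w2 \<mu> cV N"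
    using iter_expr[of n ab "lam K" w2] unfolding N_def ab_def by auto
  define dU where "dU = dexpr w1 cU"
  define dV where "dV = dexpr w2 cV"
  define S where "S = ({..Suc N} \<times> {..Suc N}) - {(Suc N, Suc N)}"
  define B where "B u v = (\<Sum>(i,k)\<in>S. trm w1 w2 (dU i) (dV k) i k u v)
       - m * (\<Sum>i\<le>N. \<Sum>k\<le>N. trm w1 w2 (cU i) (cV k) i k u v)" for u v
  define Q where "Q u = B u u" for u
  have finS: "finite S" by (simp add: S_def)
  have qf: "quadratic_form_on test_fun Q"
    unfolding quadratic_form_on_def
  proof (intro exI[of _ B] conjI ballI allI)
    show "\<And>u. u \<in> test_fun \<Longrightarrow> Q u = B u u" by (simp add: Q_def)
    fix u v z a b assume u: "u \<in> test_fun" and v: "v \<in> test_fun" and z: "z \<in> test_fun"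
    show "B (\<lambda>x. a * u x + b * v x) z = a * B u z + b * B v z"
      unfolding B_def using term_lin1[OF u v z]
      by (simp add: sum.distrib sum_distrib_left case_prod_unfold algebra_simps)
    show "B z (\<lambda>x. a * u x + b * v x) = a * B z u + b * B z v"
      unfolding B_def using term_lin2[OF u v z]
      by (simp add: sum.distrib sum_distrib_left case_prod_unfold algebra_simps)
  qed
  have b1: "\<exists>C. \<forall>\<mu>\<in>test_fun. \<bar>\<Sum>(i,k)\<in>S. trm w1 w2 (dU i) (dV k) i k \<mu> \<mu>\<bar> \<le> C * Hnorm_sq N \<mu>"
  proof -
    have "\<forall>s\<in>S. \<exists>C. \<forall>\<mu>\<in>test_fun. \<bar>(\<lambda>s \<mu>. case s of (i,k) \<Rightarrow> trm w1 w2 (dU i) (dV k) i k \<mu> \<mu>) s \<mu>\<bar> \<le> C * Hnorm_sq N \<mu>"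
    proof
      fix s assume sS: "s \<in> S"
      obtain i k where s: "s = (i, k)" by (cases s)
      have ik: "i \<le> Suc N" "k \<le> Suc N" "\<not> (i = Suc N \<and> k = Suc N)" using sS s by (auto simp: S_def)
      consider "i \<le> N \<and> k \<le> N" | "i = Suc N \<and> k \<le> N" | "k = Suc N \<and> i \<le> N" using ik by linarith
      then show "\<exists>C. \<forall>\<mu>\<in>test_fun. \<bar>(\<lambda>s \<mu>. case s of (i,k) \<Rightarrow> trm w1 w2 (dU i) (dV k) i k \<mu> \<mu>) s \<mu>\<bar> \<le> C * Hnorm_sq N \<mu>"
      proof cases
        case 1
        show ?thesis
        proof (intro exI[of _ "eb (dU i) * eb (dV k)"] ballI)
          fix \<mu> :: "real \<Rightarrow> real" assume mu: "\<mu> \<in> test_fun"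
          show "\<bar>(\<lambda>s \<mu>. case s of (i,k) \<Rightarrow> trm w1 w2 (dU i) (dV k) i k \<mu> \<mu>) s \<mu>\<bar> \<le> eb (dU i) * eb (dV k) * Hnorm_sq N \<mu>"
            using trm_low[OF mu, of i N k] 1 s by simp
        qed
      next
        case 2
        show ?thesis
        proof (intro exI ballI)
          fix \<mu> :: "real \<Rightarrow> real" assume mu: "\<mu> \<in> test_fun"
          show "\<bar>(\<lambda>s \<mu>. case s of (i,k) \<Rightarrow> trm w1 w2 (dU i) (dV k) i k \<mu> \<mu>) s \<mu>\<bar> \<le>
             (eb (dU i) * eb (dV k) + (eb (dc w1 (dU i)) * eb (dV k) + eb (dU i) * eb (dc w2 (dV k)))) * Hnorm_sq N \<mu>"
            using trm_top1[OF mu, of k N w1 w2 "dU i" "dV k"] 2 s by simp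
        qed
      next
        case 3
        show ?thesis
        proof (intro exI ballI)
          fix \<mu> :: "real \<Rightarrow> real" assume mu: "\<mu> \<in> test_fun"
          show "\<bar>(\<lambda>s \<mu>. case s of (i,k) \<Rightarrow> trm w1 w2 (dU i) (dV k) i k \<mu> \<mu>) s \<mu>\<bar> \<le>
             (eb (dU i) * eb (dV k) + (eb (dc w1 (dU i)) * eb (dV k) + eb (dU i) * eb (dc w2 (dV k)))) * Hnorm_sq N \<mu>"
            using trm_top2[OF mu, of i N w1 w2 "dU i" "dV k"] 3 s by simp
        qed
      qed
    qed
    from sum_bound[OF finS this] show ?thesis by (simp add: case_prod_unfold)
  qed
  have b2: "\<exists>C. \<forall>\<mu>\<in>test_fun. \<bar>\<Sum>i\<le>N. \<Sum>k\<le>N. trm w1 w2 (cU i) (cV k) i k \<mu> \<mu>\<bar> \<le> C * Hnorm_sq N \<mu>"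
  proof (rule sum_bound, simp, intro ballI)
    fix i assume i: "i \<in> {..N}"
    show "\<exists>C. \<forall>\<mu>\<in>test_fun. \<bar>\<Sum>k\<le>N. trm w1 w2 (cU i) (cV k) i k \<mu> \<mu>\<bar> \<le> C * Hnorm_sq N \<mu>"
    proof (rule sum_bound, simp, intro ballI exI)
      fix k \<mu> assume k: "k \<in> {..N}" and mu: "\<mu> \<in> test_fun"
      show "\<bar>trm w1 w2 (cU i) (cV k) i k \<mu> \<mu>\<bar> \<le> eb (cU i) * eb (cV k) * Hnorm_sq N \<mu>"
        using trm_low[OF mu, of i N k] i k by simp
    qed
  qed
  obtain C1 where C1: "\<forall>\<mu>\<in>test_fun. \<bar>\<Sum>(i,k)\<in>S. trm w1 w2 (dU i) (dV k) i k \<mu> \<mu>\<bar> \<le> C1 * Hnorm_sq N \<mu>"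
    using b1 by blast
  obtain C2 where C2: "\<forall>\<mu>\<in>test_fun. \<bar>\<Sum>i\<le>N. \<Sum>k\<le>N. trm w1 w2 (cU i) (cV k) i k \<mu> \<mu>\<bar> \<le> C2 * Hnorm_sq N \<mu>"
    using b2 by blast
  define C where "C = \<bar>C1\<bar> + \<bar>m\<bar> * \<bar>C2\<bar> + 1"
  have Cpos: "C > 0" unfolding C_def by (simp add: add_nonneg_pos)
  have Qb: "\<bar>Q \<mu>\<bar> \<le> C * Hnorm_sq N \<mu>" if mu: "\<mu> \<in> test_fun" for \<mu>
  proof -
    have H0: "0 \<le> Hnorm_sq N \<mu>" by (rule H_nonneg[OF mu])
    define X where "X = (\<Sum>(i,k)\<in>S. trm w1 w2 (dU i) (dV k) i k \<mu> \<mu>)"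
    define Y where "Y = (\<Sum>i\<le>N. \<Sum>k\<le>N. trm w1 w2 (cU i) (cV k) i k \<mu> \<mu>)"
    define H where "H = Hnorm_sq N \<mu>"
    have X: "\<bar>X\<bar> \<le> \<bar>C1\<bar> * H"
    proof -
      have "\<bar>X\<bar> \<le> C1 * H" using C1 mu unfolding X_def H_def by blast
      also have "\<dots> \<le> \<bar>C1\<bar> * H" using H0 unfolding H_def by (intro mult_right_mono) auto
      finally show ?thesis .
    qed
    have Y: "\<bar>Y\<bar> \<le> \<bar>C2\<bar> * H"
    proof -
      have "\<bar>Y\<bar> \<le> C2 * H" using C2 mu unfolding Y_def H_def by blast
      also have "\<dots> \<le> \<bar>C2\<bar> * H" using H0 unfolding H_def by (intro mult_right_mono) auto
      finally show ?thesis .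
    qed
    have "\<bar>Q \<mu>\<bar> = \<bar>X - m * Y\<bar>" unfolding Q_def B_def X_def Y_def ..
    also have "\<dots> \<le> \<bar>X\<bar> + \<bar>m\<bar> * \<bar>Y\<bar>" by (simp add: abs_mult[symmetric] abs_triangle_ineq4)
    also have "\<bar>m\<bar> * \<bar>Y\<bar> \<le> \<bar>m\<bar> * (\<bar>C2\<bar> * H)" by (intro mult_left_mono Y) simp
    finally have "\<bar>Q \<mu>\<bar> \<le> \<bar>C1\<bar> * H + \<bar>m\<bar> * (\<bar>C2\<bar> * H)" using X by linarith
    also have "\<dots> \<le> C * H" unfolding C_def using H0 unfolding H_def by (simp add: algebra_simps)
    finally show ?thesis unfolding H_def .
  qed
  have ident: "AKp p K \<mu> = L2inner (\<lambda>x. ((deriv ^^ (2*p-1)) \<mu> x)^2 * phi 1 x) (phi K) + Q \<mu>"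
    if mu: "\<mu> \<in> test_fun" for \<mu>
  proof -
    obtain a b where abt: "0 < a" "a \<le> b" "b < 1" "\<forall>k x. x \<notin> {a..b} \<longrightarrow> Dk \<mu> k x = 0"
      using test_supp[OF mu] by blast
    define u where "u = expr w1 \<mu> (c0 ab) 0"
    define v where "v = expr w2 \<mu> (c0 ab) 0"
    define U where "U = expr w1 \<mu> cU N"
    define V where "V = expr w2 \<mu> cV N"
    have uphi: "(\<lambda>x. \<mu> x * phi 1 x) = u"
      by (rule ext) (simp add: u_def expr_def c0_def ab_def ev_def phi_def w1_def mult_ac)
    have vphi: "(\<lambda>x. \<mu> x * phi K x) = v"
      by (rule ext) (simp add: v_def expr_def c0_def ab_def ev_def phi_def w2_def mult_ac)
    have cfU: "cf j U = (lam j - lam 1)^n * cf j u" for j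
      using cf_iter[OF mu, where j=j and l="lam 1" and n=n and w=w1 and ab=ab] cU(3) mu unfolding U_def u_def by simp
    have cfV: "cf j V = (lam j - lam K)^n * cf j v" for j
      using cf_iter[OF mu, where j=j and l="lam K" and n=n and w=w2 and ab=ab] cV(3) mu unfolding V_def v_def by simp
    have sOp: "supp (opc m w1 cU) (Suc (Suc N))" by (rule supp_opc[OF cU(1)])
    have opU: "opL m U = expr w1 \<mu> (opc m w1 cU) (Suc (Suc N))"
      unfolding U_def by (rule op_expr[OF mu cU(1)])
    have cfO: "cf j (opL m U) = (lam j - m) * cf j U" for j
      unfolding U_def by (rule cf_op_expr[OF mu cU(1)])
    have cO: "continuous_on {0..1} (opL m U)" unfolding opU by (rule expr_cont[OF mu sOp])
    have cVc: "continuous_on {0..1} V" unfolding V_def by (rule expr_cont[OF mu cV(1)])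
    have aO: "approx (opL m U)" unfolding opU by (rule approx_expr[OF mu sOp])
    have aV: "approx V" unfolding V_def by (rule approx_expr[OF mu cV(1)])
    have negp: "(y - x)^n = (-1)^n * (x - y)^n" for x y :: real
    proof -
      have "y - x = (-1) * (x - y)" by simp
      then show ?thesis by (simp only: power_mult_distrib)
    qed
    have sgn: "(-1::real)^n * (-1)^n = 1" by (simp flip: power_mult_distrib)
    define Yf where "Yf i = cf (Suc i) (opL m U) * cf (Suc i) V" for i
    have Xeq: "(\<lambda>i. let j = Suc i in (lam j - (lam 1 + lam K) / 2) * (lam K - lam j)^(p-1) *
        (lam j - lam 1)^(p-1) * cc K j \<mu>) = (\<lambda>i. (-1)^n * Yf i)"
    proof
      fix i
      have cc: "cc K (Suc i) \<mu> = cf (Suc i) u * cf (Suc i) v"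
        unfolding cc_def uphi vphi cf_def ..
      show "(let j = Suc i in (lam j - (lam 1 + lam K) / 2) * (lam K - lam j)^(p-1) *
        (lam j - lam 1)^(p-1) * cc K j \<mu>) = (-1)^n * Yf i"
        unfolding Let_def Yf_def cfO cfU cfV cc n_def[symmetric] m_def[symmetric] negp[of "lam K"]
        by (simp add: mult_ac)
    qed
    have sY: "summable Yf" unfolding Yf_def by (rule summable_prod[OF cO cVc])
    have "AKp p K \<mu> = (-1)^n * (\<Sum>i. (-1)^n * Yf i)"
      unfolding AKp_def Xeq n_def ..
    also have "\<dots> = (\<Sum>i. Yf i)" using suminf_mult[OF sY, of "(-1)^n"] sgn
      by (simp add: mult.assoc[symmetric])
    also have "\<dots> = PP (opL m U) V" unfolding PP_def Yf_def ..
    also have "\<dots> = L2inner (opL m U) V" by (rule parseval[OF cO cVc aO aV])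
    also have "\<dots> = integral {0..1} (\<lambda>x. expr w1 \<mu> dU (Suc N) x * expr w2 \<mu> dV (Suc N) x)
       - m * integral {0..1} (\<lambda>x. expr w1 \<mu> cU N x * expr w2 \<mu> cV N x)"
      unfolding U_def V_def dU_def dV_def by (rule energy[OF mu cU(1) cV(1)])
    also have "\<dots> = (\<Sum>i\<le>Suc N. \<Sum>k\<le>Suc N. trm w1 w2 (dU i) (dV k) i k \<mu> \<mu>)
       - m * (\<Sum>i\<le>N. \<Sum>k\<le>N. trm w1 w2 (cU i) (cV k) i k \<mu> \<mu>)"
      by (simp add: expr_prod[OF mu mu])
    also have "(\<Sum>i\<le>Suc N. \<Sum>k\<le>Suc N. trm w1 w2 (dU i) (dV k) i k \<mu> \<mu>) =
        trm w1 w2 (dU (Suc N)) (dV (Suc N)) (Suc N) (Suc N) \<mu> \<mu> + (\<Sum>(i,k)\<in>S. trm w1 w2 (dU i) (dV k) i k \<mu> \<mu>)"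
    proof -
      have "(\<Sum>i\<le>Suc N. \<Sum>k\<le>Suc N. trm w1 w2 (dU i) (dV k) i k \<mu> \<mu>) =
          (\<Sum>(i,k)\<in>{..Suc N} \<times> {..Suc N}. trm w1 w2 (dU i) (dV k) i k \<mu> \<mu>)"
        by (rule sum.cartesian_product)
      also have "\<dots> = trm w1 w2 (dU (Suc N)) (dV (Suc N)) (Suc N) (Suc N) \<mu> \<mu> + (\<Sum>(i,k)\<in>S. trm w1 w2 (dU i) (dV k) i k \<mu> \<mu>)"
        unfolding S_def by (subst sum.remove[of _ "(Suc N, Suc N)"]) auto
      finally show ?thesis .
    qed
    also have "trm w1 w2 (dU (Suc N)) (dV (Suc N)) (Suc N) (Suc N) \<mu> \<mu> =
        L2inner (\<lambda>x. ((deriv ^^ (2*p-1)) \<mu> x)^2 * phi 1 x) (phi K)"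
    proof -
      have t1: "dU (Suc N) = ((-1)^n * sqrt 2, 0)" unfolding dU_def dexpr_top[OF cU(1)] cU(2) ..
      have t2: "dV (Suc N) = ((-1)^n * sqrt 2, 0)" unfolding dV_def dexpr_top[OF cV(1)] cV(2) ..
      have sq: "sqrt 2 * sqrt 2 = (2::real)" by simp
      have w: "ev w1 (dU (Suc N)) x * ev w2 (dV (Suc N)) x = phi 1 x * phi K x" for x
      proof -
        have "ev w1 (dU (Suc N)) x * ev w2 (dV (Suc N)) x =
            ((-1)^n * (-1)^n) * (sqrt 2 * sqrt 2) * (sin (pi * x) * sin (real K * pi * x))"
          unfolding t1 t2 ev_def w1_def w2_def by (simp add: mult_ac)
        also have "\<dots> = (sqrt 2 * sqrt 2) * (sin (pi * x) * sin (real K * pi * x))" using sgn by simp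
        also have "\<dots> = phi 1 x * phi K x" unfolding phi_def by (simp add: mult_ac)
        finally show ?thesis .
      qed
      show ?thesis unfolding trm_def L2inner_def pN(1) Dk_def[symmetric]
        by (simp add: w power2_eq_square mult_ac)
    qed
    finally show ?thesis unfolding Q_def B_def by simp
  qed
  show ?thesis
    using qf Qb ident Cpos pN by (intro exI[of _ C] conjI exI[of _ Q]) auto
qed


end
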